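(* In the crossed product setting described in the context, with $\ast$ an involution on $D$ satisfying $K^\ast\subseteq K$, the following are equivalent: (1) $(k^\ast)^\sigma=(k^\sigma)^\ast$ for every $k\in K$ and $\sigma\in G$; (2) $e_\sigma^\ast e_\sigma\in K$ for every $\sigma\in G$; (3) $f(e_\tau^\ast e_\sigma)=0$ for all $\sigma,\tau\in G$ with $\sigma\neq\tau$.
   Context: Let $K/F$ be a finite Galois extension of fields of characteristic $0$ with Galois group $G$; write $k^\sigma$ for the image of $k\in K$ under $\sigma\in G$. Let $\Phi\colon G\times G\to K\setminus\{0\}$ be a normalized $2$-cocycle, and let $D=(K/F,\Phi)$ be the crossed product: the right $K$-vector space with basis $(e_\sigma)_{\sigma\in G}$, $e_{\mathrm{id}}=1$, with multiplication $(\sum_\sigma e_\sigma c_\sigma)(\sum_\tau e_\tau d_\tau)=\sum_{\sigma,\tau}e_{\sigma\tau}\Phi(\sigma,\tau)c_\sigma^\tau d_\tau$ (so $ke_\sigma=e_\sigma k^\sigma$ for $k\in K$). Assume $D$ is a division algebra (it is central simple over $F$ with maximal subfield $K$). An involution is an additive anti-automorphism of order at most $2$. Define $f\colon D\to K$ by $f(\sum_\sigma e_\sigma c_\sigma)=c_{\mathrm{id}}$. *)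

theory Defs
  imports Main
begin

text \<open>The field K is the type 'k (characteristic 0). G is a finite group of field
automorphisms of K; F is its fixed field, so K/F is Galois with group G (Artin).
We write k^sigma as the function application sigma k. Since the action is a right
action, (k^sigma)^tau = k^(sigma tau), the group product sigma tau is the
composition tau o sigma.\<close>

definition field_aut :: "('k::field \<Rightarrow> 'k) \<Rightarrow> bool" where
  "field_aut s \<longleftrightarrow> bij s \<and> (\<forall>x y. s (x + y) = s x + s y) \<and> (\<forall>x y. s (x * y) = s x * s y) \<and> s 1 = 1"

definition gmul :: "('k \<Rightarrow> 'k) \<Rightarrow> ('k \<Rightarrow> 'k) \<Rightarrow> ('k \<Rightarrow> 'k)" where
  "gmul s t = t \<circ> s"

definition aut_group :: "('k::field \<Rightarrow> 'k) set \<Rightarrow> bool" where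
  "aut_group G \<longleftrightarrow> finite G \<and> id \<in> G \<and> (\<forall>s\<in>G. field_aut s)
     \<and> (\<forall>s\<in>G. \<forall>t\<in>G. gmul s t \<in> G) \<and> (\<forall>s\<in>G. inv s \<in> G)"

definition fixed_field :: "('k::field \<Rightarrow> 'k) set \<Rightarrow> 'k set" where
  "fixed_field G = {x. \<forall>s\<in>G. s x = x}"

definition normalized_cocycle :: "('k::field \<Rightarrow> 'k) set \<Rightarrow> (('k \<Rightarrow> 'k) \<Rightarrow> ('k \<Rightarrow> 'k) \<Rightarrow> 'k) \<Rightarrow> bool" where
  "normalized_cocycle G Phi \<longleftrightarrow>
     (\<forall>s\<in>G. \<forall>t\<in>G. Phi s t \<noteq> 0)
   \<and> (\<forall>s\<in>G. Phi id s = 1 \<and> Phi s id = 1)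
   \<and> (\<forall>s\<in>G. \<forall>t\<in>G. \<forall>r\<in>G.
        Phi (gmul s t) r * r (Phi s t) = Phi s (gmul t r) * Phi t r)"

text \<open>Elements of the crossed product D = (K/F, Phi): an element sum_s e_s c_s is
represented by its coefficient function c, which vanishes outside G.\<close>
type_synonym 'k cp = "('k \<Rightarrow> 'k) \<Rightarrow> 'k"

definition cp_carrier :: "('k::field \<Rightarrow> 'k) set \<Rightarrow> 'k cp set" where
  "cp_carrier G = {c. \<forall>s. s \<notin> G \<longrightarrow> c s = 0}"

definition cp_add :: "('k::field \<Rightarrow> 'k) set \<Rightarrow> 'k cp \<Rightarrow> 'k cp \<Rightarrow> 'k cp" where
  "cp_add G c d = (\<lambda>r. if r \<in> G then c r + d r else 0)"

definition cp_mult :: "('k::field \<Rightarrow> 'k) set \<Rightarrow> (('k \<Rightarrow> 'k) \<Rightarrow> ('k \<Rightarrow> 'k) \<Rightarrow> 'k)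
    \<Rightarrow> 'k cp \<Rightarrow> 'k cp \<Rightarrow> 'k cp" where
  "cp_mult G Phi c d = (\<lambda>r. if r \<in> G then
      (\<Sum>s\<in>G. \<Sum>t\<in>G. if gmul s t = r then Phi s t * t (c s) * d t else 0) else 0)"

definition cp_basis :: "('k::field \<Rightarrow> 'k) \<Rightarrow> 'k cp" where
  "cp_basis s = (\<lambda>r. if r = s then 1 else 0)"

definition cp_emb :: "'k::field \<Rightarrow> 'k cp" where
  "cp_emb k = (\<lambda>r. if r = id then k else 0)"

definition cp_f :: "'k::field cp \<Rightarrow> 'k" where
  "cp_f x = x id"

definition cp_division :: "('k::field \<Rightarrow> 'k) set \<Rightarrow> (('k \<Rightarrow> 'k) \<Rightarrow> ('k \<Rightarrow> 'k) \<Rightarrow> 'k) \<Rightarrow> bool" where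
  "cp_division G Phi \<longleftrightarrow> (\<forall>x\<in>cp_carrier G. x \<noteq> (\<lambda>_. 0) \<longrightarrow>
      (\<exists>y\<in>cp_carrier G. cp_mult G Phi x y = cp_emb 1 \<and> cp_mult G Phi y x = cp_emb 1))"

text \<open>Involution: additive anti-automorphism of order at most 2 (bijectivity follows
from star o star = id).\<close>
definition cp_involution :: "('k::field \<Rightarrow> 'k) set \<Rightarrow> (('k \<Rightarrow> 'k) \<Rightarrow> ('k \<Rightarrow> 'k) \<Rightarrow> 'k)
    \<Rightarrow> ('k cp \<Rightarrow> 'k cp) \<Rightarrow> bool" where
  "cp_involution G Phi st \<longleftrightarrow>
     (\<forall>x\<in>cp_carrier G. st x \<in> cp_carrier G)
   \<and> (\<forall>x\<in>cp_carrier G. \<forall>y\<in>cp_carrier G. st (cp_add G x y) = cp_add G (st x) (st y))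
   \<and> (\<forall>x\<in>cp_carrier G. \<forall>y\<in>cp_carrier G. st (cp_mult G Phi x y) = cp_mult G Phi (st y) (st x))
   \<and> (\<forall>x\<in>cp_carrier G. st (st x) = x)"

text \<open>The restriction of the involution to K (meaningful when K^* is contained in K).\<close>
definition kstar :: "('k::field cp \<Rightarrow> 'k cp) \<Rightarrow> 'k \<Rightarrow> 'k" where
  "kstar st k = cp_f (st (cp_emb k))"

end

theory Submission imports Defs begin

lemma ag_fa: "aut_group G \<Longrightarrow> s \<in> G \<Longrightarrow> field_aut s"
  by (simp add: aut_group_def)
lemma fa_zero: "field_aut s \<Longrightarrow> s 0 = (0::'k::field)"
proof -
  assume a: "field_aut s"
  have "s (0+0) = s 0 + s 0" using a unfolding field_aut_def by blast
  hence "s 0 + s 0 = s 0 + 0" by simp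
  thus ?thesis by (simp only: add_left_cancel)
qed
lemma fa_eq0: "field_aut s \<Longrightarrow> (s x = (0::'k::field)) = (x = 0)"
proof -
  assume a: "field_aut s"
  hence "inj s" by (simp add: field_aut_def bij_def)
  thus ?thesis using fa_zero[OF a] by (metis injD)
qed
lemma ag_il: "aut_group G \<Longrightarrow> s \<in> G \<Longrightarrow> inv s \<circ> s = id"
  by (meson ag_fa bij_def field_aut_def inv_o_cancel)
lemma ag_ir: "aut_group G \<Longrightarrow> s \<in> G \<Longrightarrow> s \<circ> inv s = id"
  by (meson ag_fa bij_def field_aut_def surj_iff)
lemma ag_comp: "aut_group G \<Longrightarrow> s \<in> G \<Longrightarrow> t \<in> G \<Longrightarrow> t \<circ> s \<in> G"
  by (metis aut_group_def gmul_def)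
lemma ag_inv: "aut_group G \<Longrightarrow> s \<in> G \<Longrightarrow> inv s \<in> G"
  by (simp add: aut_group_def)
lemma ag_id: "aut_group G \<Longrightarrow> id \<in> G"
  by (simp add: aut_group_def)
lemma ag_fin: "aut_group G \<Longrightarrow> finite G"
  by (simp add: aut_group_def)

lemma mult_t:
  assumes G: "aut_group G" and r: "r \<in> G"
  shows "cp_mult G Phi x y r = (\<Sum>t\<in>G. Phi (inv t \<circ> r) t * t (x (inv t \<circ> r)) * y t)"
proof -
  have "cp_mult G Phi x y r = (\<Sum>s\<in>G. \<Sum>t\<in>G. if gmul s t = r then Phi s t * t (x s) * y t else 0)"
    using r by (simp add: cp_mult_def)
  also have "\<dots> = (\<Sum>t\<in>G. \<Sum>s\<in>G. if gmul s t = r then Phi s t * t (x s) * y t else 0)"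
    by (rule sum.swap)
  also have "\<dots> = (\<Sum>t\<in>G. Phi (inv t \<circ> r) t * t (x (inv t \<circ> r)) * y t)"
  proof (rule sum.cong[OF refl])
    fix t assume t: "t \<in> G"
    have "\<forall>s\<in>G. (gmul s t = r) = (s = inv t \<circ> r)"
    proof
      fix s assume s: "s \<in> G"
      show "(gmul s t = r) = (s = inv t \<circ> r)"
      proof
        assume "gmul s t = r"
        hence "t \<circ> s = r" by (simp add: gmul_def)
        hence "inv t \<circ> (t \<circ> s) = inv t \<circ> r" by simp
        thus "s = inv t \<circ> r" using ag_il[OF G t] by (simp add: o_assoc)
      next
        assume "s = inv t \<circ> r"
        thus "gmul s t = r" using ag_ir[OF G t] by (simp add: gmul_def o_assoc)
      qed
    qed
    hence "(\<Sum>s\<in>G. if gmul s t = r then Phi s t * t (x s) * y t else 0)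
         = (\<Sum>s\<in>G. if s = inv t \<circ> r then Phi s t * t (x s) * y t else 0)"
      by (intro sum.cong) auto
    also have "\<dots> = Phi (inv t \<circ> r) t * t (x (inv t \<circ> r)) * y t"
      using ag_fin[OF G] ag_comp[OF G r ag_inv[OF G t]] by (simp add: sum.delta)
    finally show "(\<Sum>s\<in>G. if gmul s t = r then Phi s t * t (x s) * y t else 0)
         = Phi (inv t \<circ> r) t * t (x (inv t \<circ> r)) * y t" .
  qed
  finally show ?thesis .
qed

lemma mult_s:
  assumes G: "aut_group G" and r: "r \<in> G"
  shows "cp_mult G Phi x y r = (\<Sum>s\<in>G. Phi s (r \<circ> inv s) * (r \<circ> inv s) (x s) * y (r \<circ> inv s))"
proof -
  have "cp_mult G Phi x y r = (\<Sum>s\<in>G. \<Sum>t\<in>G. if gmul s t = r then Phi s t * t (x s) * y t else 0)"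
    using r by (simp add: cp_mult_def)
  also have "\<dots> = (\<Sum>s\<in>G. Phi s (r \<circ> inv s) * (r \<circ> inv s) (x s) * y (r \<circ> inv s))"
  proof (rule sum.cong[OF refl])
    fix s assume s: "s \<in> G"
    have "\<forall>t\<in>G. (gmul s t = r) = (t = r \<circ> inv s)"
    proof
      fix t assume t: "t \<in> G"
      show "(gmul s t = r) = (t = r \<circ> inv s)"
      proof
        assume "gmul s t = r"
        hence "t \<circ> s = r" by (simp add: gmul_def)
        hence "t \<circ> s \<circ> inv s = r \<circ> inv s" by simp
        thus "t = r \<circ> inv s" using ag_ir[OF G s] by (simp add: o_assoc[symmetric])
      next
        assume "t = r \<circ> inv s"
        thus "gmul s t = r" using ag_il[OF G s] by (simp add: gmul_def o_assoc[symmetric])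
      qed
    qed
    hence "(\<Sum>t\<in>G. if gmul s t = r then Phi s t * t (x s) * y t else 0)
         = (\<Sum>t\<in>G. if t = r \<circ> inv s then Phi s t * t (x s) * y t else 0)"
      by (intro sum.cong) auto
    also have "\<dots> = Phi s (r \<circ> inv s) * (r \<circ> inv s) (x s) * y (r \<circ> inv s)"
      using ag_fin[OF G] ag_comp[OF G ag_inv[OF G s] r] by (simp add: sum.delta)
    finally show "(\<Sum>t\<in>G. if gmul s t = r then Phi s t * t (x s) * y t else 0)
         = Phi s (r \<circ> inv s) * (r \<circ> inv s) (x s) * y (r \<circ> inv s)" .
  qed
  finally show ?thesis .
qed

lemma mult_basis_right:
  assumes G: "aut_group G" and r: "r \<in> G" and s: "s \<in> G"
  shows "cp_mult G Phi x (cp_basis s) r = Phi (inv s \<circ> r) s * s (x (inv s \<circ> r))"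
proof -
  have "cp_mult G Phi x (cp_basis s) r = (\<Sum>t\<in>G. if t = s then Phi (inv t \<circ> r) t * t (x (inv t \<circ> r)) else 0)"
    unfolding mult_t[OF G r] by (intro sum.cong) (auto simp: cp_basis_def)
  thus ?thesis using s ag_fin[OF G] by (simp add: sum.delta)
qed

lemma mult_emb_right:
  assumes G: "aut_group G" and P: "normalized_cocycle G Phi" and r: "r \<in> G"
  shows "cp_mult G Phi x (cp_emb k) r = x r * k"
proof -
  have "cp_mult G Phi x (cp_emb k) r = (\<Sum>t\<in>G. if t = id then Phi (inv t \<circ> r) t * t (x (inv t \<circ> r)) * k else 0)"
    unfolding mult_t[OF G r] by (intro sum.cong) (auto simp: cp_emb_def)
  thus ?thesis using ag_id[OF G] ag_fin[OF G] P r by (simp add: sum.delta normalized_cocycle_def)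
qed

lemma mult_emb_left:
  assumes G: "aut_group G" and P: "normalized_cocycle G Phi" and r: "r \<in> G"
  shows "cp_mult G Phi (cp_emb k) y r = r k * y r"
proof -
  have "cp_mult G Phi (cp_emb k) y r = (\<Sum>s\<in>G. if s = id then Phi s (r \<circ> inv s) * (r \<circ> inv s) k * y (r \<circ> inv s) else 0)"
    unfolding mult_s[OF G r]
  proof (intro sum.cong refl)
    fix s assume s: "s \<in> G"
    have fa: "field_aut (r \<circ> inv s)" using ag_fa[OF G ag_comp[OF G ag_inv[OF G s] r]] .
    show "Phi s (r \<circ> inv s) * (r \<circ> inv s) (cp_emb k s) * y (r \<circ> inv s) =
      (if s = id then Phi s (r \<circ> inv s) * (r \<circ> inv s) k * y (r \<circ> inv s) else 0)"
      using fa_zero[OF fa] by (auto simp: cp_emb_def)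
  qed
  thus ?thesis using ag_id[OF G] ag_fin[OF G] P r by (simp add: sum.delta normalized_cocycle_def)
qed

lemma inv_inv_G: "aut_group G \<Longrightarrow> s \<in> G \<Longrightarrow> inv (inv s) = s"
  by (meson ag_fa field_aut_def inv_inv_eq)

theorem proposition3p2:
  fixes G :: "('k::field_char_0 \<Rightarrow> 'k) set"
    and Phi :: "('k \<Rightarrow> 'k) \<Rightarrow> ('k \<Rightarrow> 'k) \<Rightarrow> 'k"
    and st :: "'k cp \<Rightarrow> 'k cp"
  assumes "aut_group G"
    and "normalized_cocycle G Phi"
    and "cp_division G Phi"
    and "cp_involution G Phi st"
    and "\<forall>k. \<exists>k'. st (cp_emb k) = cp_emb k'"
  shows "((\<forall>k. \<forall>s\<in>G. s (kstar st k) = kstar st (s k))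
          \<longleftrightarrow> (\<forall>s\<in>G. \<exists>k. cp_mult G Phi (st (cp_basis s)) (cp_basis s) = cp_emb k))
       \<and> ((\<forall>s\<in>G. \<exists>k. cp_mult G Phi (st (cp_basis s)) (cp_basis s) = cp_emb k)
          \<longleftrightarrow> (\<forall>s\<in>G. \<forall>t\<in>G. s \<noteq> t \<longrightarrow> cp_f (cp_mult G Phi (st (cp_basis t)) (cp_basis s)) = 0))"
proof -
  note G = assms(1) and P = assms(2)
  have inv1: "\<forall>x\<in>cp_carrier G. st x \<in> cp_carrier G"
   and inv2: "\<forall>x\<in>cp_carrier G. \<forall>y\<in>cp_carrier G. st (cp_add G x y) = cp_add G (st x) (st y)"
   and inv3: "\<forall>x\<in>cp_carrier G. \<forall>y\<in>cp_carrier G. st (cp_mult G Phi x y) = cp_mult G Phi (st y) (st x)"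
   and inv4: "\<forall>x\<in>cp_carrier G. st (st x) = x"
    using assms(4) unfolding cp_involution_def by blast+
  have idG: "id \<in> G" using ag_id[OF G] .
  have Phinz: "\<And>s t. s \<in> G \<Longrightarrow> t \<in> G \<Longrightarrow> Phi s t \<noteq> 0" using P by (simp add: normalized_cocycle_def)
  have embC: "\<And>k. cp_emb k \<in> cp_carrier G" using idG by (auto simp: cp_emb_def cp_carrier_def)
  have basC: "\<And>s. s \<in> G \<Longrightarrow> cp_basis s \<in> cp_carrier G" by (auto simp: cp_basis_def cp_carrier_def)
  have stemb: "\<And>k. st (cp_emb k) = cp_emb (kstar st k)"
  proof -
    fix k obtain k' where "st (cp_emb k) = cp_emb k'" using assms(5) by blast
    thus "st (cp_emb k) = cp_emb (kstar st k)" by (simp add: kstar_def cp_f_def cp_emb_def)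
  qed
  have kk: "\<And>k. kstar st (kstar st k) = k"
  proof -
    fix k
    have "cp_emb k = st (st (cp_emb k))" using inv4 embC by simp
    also have "\<dots> = cp_emb (kstar st (kstar st k))" by (simp add: stemb)
    finally show "kstar st (kstar st k) = k" by (metis cp_emb_def)
  qed
  define a where "a s = st (cp_basis s)" for s
  have aC: "\<And>s. s \<in> G \<Longrightarrow> a s \<in> cp_carrier G" using inv1 basC a_def by simp
  have aout: "\<And>s r. s \<in> G \<Longrightarrow> r \<notin> G \<Longrightarrow> a s r = 0" using aC by (simp add: cp_carrier_def)
  have R: "\<And>s r k. s \<in> G \<Longrightarrow> r \<in> G \<Longrightarrow> a s r * kstar st k = r (kstar st (s k)) * a s r"
  proof -
    fix s r k assume s: "s \<in> G" and r: "r \<in> G"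
    have eq: "cp_mult G Phi (cp_emb k) (cp_basis s) = cp_mult G Phi (cp_basis s) (cp_emb (s k))"
    proof
      fix q show "cp_mult G Phi (cp_emb k) (cp_basis s) q = cp_mult G Phi (cp_basis s) (cp_emb (s k)) q"
      proof (cases "q \<in> G")
        case True thus ?thesis using mult_emb_left[OF G P True] mult_emb_right[OF G P True]
          by (simp add: cp_basis_def)
      next
        case False thus ?thesis by (simp add: cp_mult_def)
      qed
    qed
    have "st (cp_mult G Phi (cp_emb k) (cp_basis s)) = cp_mult G Phi (a s) (cp_emb (kstar st k))"
      using inv3 embC basC[OF s] by (simp add: a_def stemb)
    moreover have "st (cp_mult G Phi (cp_basis s) (cp_emb (s k))) = cp_mult G Phi (cp_emb (kstar st (s k))) (a s)"
      using inv3 embC basC[OF s] by (simp add: a_def stemb)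
    ultimately have "cp_mult G Phi (a s) (cp_emb (kstar st k)) r = cp_mult G Phi (cp_emb (kstar st (s k))) (a s) r"
      using eq by simp
    thus "a s r * kstar st k = r (kstar st (s k)) * a s r"
      using mult_emb_left[OF G P r] mult_emb_right[OF G P r] by simp
  qed
  define Z :: "'k cp" where "Z = (\<lambda>_. 0)"
  have ZC: "Z \<in> cp_carrier G" by (simp add: Z_def cp_carrier_def)
  have stZ: "st Z = Z"
  proof
    fix q
    have "cp_add G Z Z = Z" by (auto simp: cp_add_def Z_def)
    hence "st Z = cp_add G (st Z) (st Z)" using inv2 ZC by metis
    hence "st Z q = cp_add G (st Z) (st Z) q" by simp
    moreover have "st Z \<in> cp_carrier G" using inv1 ZC by blast
    ultimately show "st Z q = Z q" by (cases "q \<in> G") (auto simp: cp_add_def Z_def cp_carrier_def)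
  qed
  have anz: "\<And>s. s \<in> G \<Longrightarrow> a s \<noteq> Z"
  proof
    fix s assume s: "s \<in> G" and "a s = Z"
    hence "cp_basis s = Z" using inv4 basC[OF s] stZ by (metis a_def)
    thus False by (metis Z_def cp_basis_def one_neq_zero)
  qed
  define PP where "PP = (\<forall>s\<in>G. \<forall>\<rho>\<in>G. \<rho> \<noteq> inv s \<longrightarrow> a s \<rho> = 0)"
  have fas: "\<And>s x. s \<in> G \<Longrightarrow> (s x = 0) = (x = 0)" using fa_eq0 ag_fa[OF G] by blast
  have c2: "(\<forall>s\<in>G. \<exists>k. cp_mult G Phi (st (cp_basis s)) (cp_basis s) = cp_emb k) = PP"
  proof
    assume H: "\<forall>s\<in>G. \<exists>k. cp_mult G Phi (st (cp_basis s)) (cp_basis s) = cp_emb k"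
    show PP unfolding PP_def
    proof (intro ballI impI)
      fix s \<rho> assume s: "s \<in> G" and \<rho>: "\<rho> \<in> G" and ne: "\<rho> \<noteq> inv s"
      obtain k where k: "cp_mult G Phi (a s) (cp_basis s) = cp_emb k" using H s unfolding a_def by blast
      define r where "r = s \<circ> \<rho>"
      have r: "r \<in> G" using ag_comp[OF G \<rho> s] r_def by simp
      have ir: "inv s \<circ> r = \<rho>" using ag_il[OF G s] r_def by (simp add: o_assoc)
      have "r \<noteq> id"
      proof
        assume "r = id" hence "\<rho> = inv s" using ir by simp
        thus False using ne by simp
      qed
      hence "cp_mult G Phi (a s) (cp_basis s) r = 0" using k by (simp add: cp_emb_def)
      hence "Phi \<rho> s * s (a s \<rho>) = 0" using mult_basis_right[OF G r s] ir by simp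
      thus "a s \<rho> = 0" using Phinz[OF \<rho> s] fas[OF s] by simp
    qed
  next
    assume H: PP
    show "\<forall>s\<in>G. \<exists>k. cp_mult G Phi (st (cp_basis s)) (cp_basis s) = cp_emb k"
    proof
      fix s assume s: "s \<in> G"
      have "cp_mult G Phi (a s) (cp_basis s) = cp_emb (cp_mult G Phi (a s) (cp_basis s) id)"
      proof
        fix r show "cp_mult G Phi (a s) (cp_basis s) r = cp_emb (cp_mult G Phi (a s) (cp_basis s) id) r"
        proof (cases "r \<in> G")
          case False thus ?thesis using idG by (auto simp: cp_mult_def cp_emb_def)
        next
          case r: True
          show ?thesis
          proof (cases "r = id")
            case True thus ?thesis by (simp add: cp_emb_def)
          next
            case False
            have "inv s \<circ> r \<noteq> inv s"
            proof
              assume "inv s \<circ> r = inv s"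
              hence "s \<circ> (inv s \<circ> r) = s \<circ> inv s" by simp
              hence "r = id" using ag_ir[OF G s] by (simp add: o_assoc)
              thus False using False by simp
            qed
            hence "a s (inv s \<circ> r) = 0" using H ag_comp[OF G r ag_inv[OF G s]] s unfolding PP_def by blast
            thus ?thesis using mult_basis_right[OF G r s] False fas[OF s] by (simp add: cp_emb_def)
          qed
        qed
      qed
      thus "\<exists>k. cp_mult G Phi (st (cp_basis s)) (cp_basis s) = cp_emb k" using a_def by metis
    qed
  qed
  have fval: "\<And>s t. s \<in> G \<Longrightarrow> t \<in> G \<Longrightarrow> cp_f (cp_mult G Phi (st (cp_basis t)) (cp_basis s)) = Phi (inv s) s * s (a t (inv s))"
    using mult_basis_right[OF G idG] by (simp add: cp_f_def a_def)
  have c3: "(\<forall>s\<in>G. \<forall>t\<in>G. s \<noteq> t \<longrightarrow> cp_f (cp_mult G Phi (st (cp_basis t)) (cp_basis s)) = 0) = PP"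
  proof
    assume H: "\<forall>s\<in>G. \<forall>t\<in>G. s \<noteq> t \<longrightarrow> cp_f (cp_mult G Phi (st (cp_basis t)) (cp_basis s)) = 0"
    show PP unfolding PP_def
    proof (intro ballI impI)
      fix s \<rho> assume s: "s \<in> G" and \<rho>: "\<rho> \<in> G" and ne: "\<rho> \<noteq> inv s"
      have i\<rho>: "inv \<rho> \<in> G" using ag_inv[OF G \<rho>] .
      have "inv \<rho> \<noteq> s" using ne inv_inv_G[OF G \<rho>] by auto
      hence "Phi (inv (inv \<rho>)) (inv \<rho>) * inv \<rho> (a s (inv (inv \<rho>))) = 0"
        using H i\<rho> s fval[OF i\<rho> s] by auto
      thus "a s \<rho> = 0" using Phinz[OF ag_inv[OF G i\<rho>] i\<rho>] fas[OF i\<rho>] inv_inv_G[OF G \<rho>] by simp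
    qed
  next
    assume H: PP
    show "\<forall>s\<in>G. \<forall>t\<in>G. s \<noteq> t \<longrightarrow> cp_f (cp_mult G Phi (st (cp_basis t)) (cp_basis s)) = 0"
    proof (intro ballI impI)
      fix s t assume s: "s \<in> G" and t: "t \<in> G" and ne: "s \<noteq> t"
      have "inv s \<noteq> inv t" using ne inv_inv_G[OF G s] inv_inv_G[OF G t] by metis
      hence "a t (inv s) = 0" using H ag_inv[OF G s] t unfolding PP_def by blast
      thus "cp_f (cp_mult G Phi (st (cp_basis t)) (cp_basis s)) = 0" using fval[OF s t] fas[OF s] by simp
    qed
  qed
  have c1: "(\<forall>k. \<forall>s\<in>G. s (kstar st k) = kstar st (s k)) = PP"
  proof
    assume H: "\<forall>k. \<forall>s\<in>G. s (kstar st k) = kstar st (s k)"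
    show PP unfolding PP_def
    proof (intro ballI impI)
      fix s \<rho> assume s: "s \<in> G" and \<rho>: "\<rho> \<in> G" and ne: "\<rho> \<noteq> inv s"
      show "a s \<rho> = 0"
      proof (rule ccontr)
        assume nz: "a s \<rho> \<noteq> 0"
        have "\<And>k. kstar st k = \<rho> (s (kstar st k))"
        proof -
          fix k
          have "a s \<rho> * kstar st k = a s \<rho> * \<rho> (kstar st (s k))" using R[OF s \<rho>, of k] by (simp add: mult.commute)
          hence "kstar st k = \<rho> (kstar st (s k))" using nz by simp
          thus "kstar st k = \<rho> (s (kstar st k))" using H s by simp
        qed
        hence "\<And>j. \<rho> (s j) = j" by (metis kk)
        hence "\<rho> \<circ> s = id" by auto
        hence "\<rho> \<circ> s \<circ> inv s = inv s" by simp
        hence "\<rho> = inv s" using ag_ir[OF G s] by (simp add: o_assoc[symmetric])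
        thus False using ne by simp
      qed
    qed
  next
    assume H: PP
    show "\<forall>k. \<forall>s\<in>G. s (kstar st k) = kstar st (s k)"
    proof (intro allI ballI)
      fix k s assume s: "s \<in> G"
      have iS: "inv s \<in> G" using ag_inv[OF G s] .
      have nz: "a s (inv s) \<noteq> 0"
      proof
        assume z: "a s (inv s) = 0"
        have "a s = Z"
        proof
          fix r show "a s r = Z r"
            using z H aout[OF s] s unfolding PP_def Z_def by (cases "r \<in> G") auto
        qed
        thus False using anz[OF s] by simp
      qed
      have "a s (inv s) * kstar st k = a s (inv s) * inv s (kstar st (s k))"
        using R[OF s iS, of k] by (simp add: mult.commute)
      hence "kstar st k = inv s (kstar st (s k))" using nz by simp
      hence "s (kstar st k) = (s \<circ> inv s) (kstar st (s k))" by simp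
      thus "s (kstar st k) = kstar st (s k)" using ag_ir[OF G s] by simp
    qed
  qed
  show ?thesis using c1 c2 c3 by simp
qed

end
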